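(* Let $\phi_{\mathrm p}$ (on $\mathbb R^n$) and $\phi_{\mathrm d}$ (on $\mathbb R^m$) be Bregman kernels with distances $d_{\mathrm p},d_{\mathrm d}$ satisfying $d_{\mathrm p}(x,x')\ge\frac12\|x-x'\|_{\mathrm p}^2$ and $d_{\mathrm d}(z,z')\ge\frac12\|z-z'\|_{\mathrm d}^2$ for all $(x,x')\in\operatorname{dom} d_{\mathrm p}$, $(z,z')\in\operatorname{dom} d_{\mathrm d}$, where $\|\cdot\|_{\mathrm p},\|\cdot\|_{\mathrm d}$ are norms. Let $h$ be a convex function, differentiable on its open domain, with $\operatorname{dom}\phi_{\mathrm p}\subseteq\operatorname{dom} h$ and, for some $L>0$, $h(x)-h(x')-\langle\nabla h(x'),x-x'\rangle\le L\,d_{\mathrm p}(x,x')$ for all $(x,x')\in\operatorname{dom} d_{\mathrm p}$. Let $A\in\mathbb R^{m\times n}$, $\|A\|=\sup_{u\ne0,v\ne0}\frac{\langle v,Au\rangle}{\|v\|_{\mathrm d}\|u\|_{\mathrm p}}$, and $\sigma,\tau>0$. Define \[\phi_\pm(x,z)=\tfrac1\tau\phi_{\mathrm p}(x)+\tfrac1\sigma\phi_{\mathrm d}(z)\pm\langle z,Ax\rangle,\qquad \phi_{\mathrm{dcv}}=\phi_+-h,\quad \phi_{\mathrm{pcv}}=\phi_--h.\] Then: if $\sigma\tau\|A\|^2\le1$, the functions $\phi_+$ and $\phi_-$ are convex, and they are strongly convex if $\sigma\tau\|A\|^2<1$; if $\sigma\tau\|A\|^2+\tau L\le1$, the functions $\phi_{\mathrm{dcv}}$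 and $\phi_{\mathrm{pcv}}$ are convex, and they are strongly convex if $\sigma\tau\|A\|^2+\tau L<1$.
   Context: A Bregman kernel is a convex function $\phi$ whose domain has nonempty interior, continuous on $\operatorname{dom}\phi$ and continuously differentiable on $\operatorname{int}(\operatorname{dom}\phi)$; its Bregman distance is $d(x,y)=\phi(x)-\phi(y)-\langle\nabla\phi(y),x-y\rangle$ with $\operatorname{dom} d=\operatorname{dom}\phi\times\operatorname{int}(\operatorname{dom}\phi)$. The functions $h(x)$, $\phi_\pm$ etc. are considered on $\operatorname{dom}\phi_{\mathrm p}\times\operatorname{dom}\phi_{\mathrm d}$. *)

theory Defs
  imports "HOL-Analysis.Analysis"
begin

definition is_norm :: "('a::real_vector \<Rightarrow> real) \<Rightarrow> bool" where
  "is_norm N \<longleftrightarrow> (\<forall>x. 0 \<le> N x) \<and> (\<forall>x. N x = 0 \<longleftrightarrow> x = 0)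
     \<and> (\<forall>c x. N (c *\<^sub>R x) = \<bar>c\<bar> * N x) \<and> (\<forall>x y. N (x + y) \<le> N x + N y)"

text \<open>Bregman kernel with domain D (a function is identified with its restriction to
  its effective domain D) and gradient g on the interior of D.\<close>
definition bregman_kernel ::
  "('a::euclidean_space) set \<Rightarrow> ('a \<Rightarrow> real) \<Rightarrow> ('a \<Rightarrow> 'a) \<Rightarrow> bool" where
  "bregman_kernel D \<phi> g \<longleftrightarrow> convex_on D \<phi> \<and> interior D \<noteq> {} \<and> continuous_on D \<phi>
     \<and> (\<forall>y\<in>interior D. (\<phi> has_derivative (\<lambda>v. g y \<bullet> v)) (at y))
     \<and> continuous_on (interior D) g"

text \<open>Bregman distance d(x,y), meaningful on dom d = D \<times> interior D.\<close>
definition bregman_dist :: "('a::euclidean_space \<Rightarrow> real) \<Rightarrow> ('a \<Rightarrow> 'a) \<Rightarrow> 'a \<Rightarrow> 'a \<Rightarrow> real" where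
  "bregman_dist \<phi> g x y = \<phi> x - \<phi> y - g y \<bullet> (x - y)"

definition op_norm_pd ::
  "(real^'n \<Rightarrow> real) \<Rightarrow> (real^'m \<Rightarrow> real) \<Rightarrow> real^'n^'m \<Rightarrow> real" where
  "op_norm_pd Np Nd A = Sup {(v \<bullet> (A *v u)) / (Nd v * Np u) | u v. u \<noteq> 0 \<and> v \<noteq> 0}"

text \<open>Strong convexity (modulus \<mu> > 0, w.r.t. the Euclidean norm; all norms are
  equivalent in finite dimension).\<close>
definition strongly_convex_on :: "('a::real_normed_vector) set \<Rightarrow> ('a \<Rightarrow> real) \<Rightarrow> bool" where
  "strongly_convex_on S f \<longleftrightarrow> (\<exists>\<mu>>0. convex_on S (\<lambda>w. f w - \<mu> / 2 * (norm w)\<^sup>2))"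

end

theory Submission
  imports Defs
begin

lemma isn_basic:
  assumes "is_norm N"
  shows "N 0 = 0" "N (- x) = N x" "N (x - y) = N (y - x)" "N (x + y) \<le> N x + N y" "N x \<ge> 0"
    "N (c *\<^sub>R x) = \<bar>c\<bar> * N x"
proof -
  show "N 0 = 0" using assms unfolding is_norm_def by auto
  show n: "N (- x) = N x" for x using assms unfolding is_norm_def
    by (metis abs_minus_cancel abs_one mult_cancel_right1 scaleR_minus1_left)
  show "N (x - y) = N (y - x)" using n[of "x - y"] by simp
qed (use assms in \<open>auto simp: is_norm_def\<close>)

lemma isn_sum:
  assumes "is_norm N" "finite I"
  shows "N (\<Sum>i\<in>I. f i) \<le> (\<Sum>i\<in>I. N (f i))"
  using assms(2)
proof (induction I rule: finite_induct)
  case empty then show ?case using isn_basic[OF assms(1)] by simp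
next
  case (insert i I)
  then show ?case using isn_basic(4)[OF assms(1), of "f i" "sum f I"] by simp
qed

lemma isn_upper:
  fixes N :: "'a::euclidean_space \<Rightarrow> real"
  assumes "is_norm N"
  shows "N x \<le> (\<Sum>b\<in>Basis. N b) * norm x"
proof -
  have "N x = N (\<Sum>b\<in>Basis. (x \<bullet> b) *\<^sub>R b)" by (simp add: euclidean_representation)
  also have "\<dots> \<le> (\<Sum>b\<in>Basis. N ((x \<bullet> b) *\<^sub>R b))" by (rule isn_sum[OF assms]) simp
  also have "\<dots> = (\<Sum>b\<in>Basis. \<bar>x \<bullet> b\<bar> * N b)" using isn_basic(6)[OF assms] by simp
  also have "\<dots> \<le> (\<Sum>b\<in>Basis. norm x * N b)"
    by (intro sum_mono mult_right_mono) (auto simp: Basis_le_norm isn_basic(5)[OF assms])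
  finally show ?thesis by (simp add: sum_distrib_left mult.commute)
qed

lemma isn_cont:
  fixes N :: "'a::euclidean_space \<Rightarrow> real"
  assumes "is_norm N"
  shows "continuous_on S N"
proof -
  let ?C = "\<Sum>b\<in>Basis. N b"
  have "?C-lipschitz_on S N"
  proof (rule lipschitz_onI)
    fix x y
    have "N x \<le> N y + N (x - y)" using isn_basic(4)[OF assms, of y "x - y"] by simp
    moreover have "N y \<le> N x + N (x - y)" using isn_basic(4)[OF assms, of x "y - x"] isn_basic(3)[OF assms, of x y] by simp
    moreover have "N (x - y) \<le> ?C * norm (x - y)" by (rule isn_upper[OF assms])
    ultimately show "dist (N x) (N y) \<le> ?C * dist x y" by (simp add: dist_norm dist_real_def abs_le_iff)
  next
    show "0 \<le> ?C" using isn_basic(5)[OF assms] by (simp add: sum_nonneg)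
  qed
  then show ?thesis by (rule lipschitz_on_continuous_on)
qed

lemma isn_lower:
  fixes N :: "'a::euclidean_space \<Rightarrow> real"
  assumes "is_norm N"
  shows "\<exists>k>0. \<forall>x. k * norm x \<le> N x"
proof -
  obtain b :: 'a where b: "b \<in> Basis" using nonempty_Basis by blast
  have ne: "sphere (0::'a) 1 \<noteq> {}" using b by (auto simp: norm_Basis)
  obtain x0 where x0: "x0 \<in> sphere 0 1" "\<And>y. y \<in> sphere 0 1 \<Longrightarrow> N x0 \<le> N y"
    using continuous_attains_inf[OF compact_sphere ne isn_cont[OF assms]] by blast
  have pos: "N x0 > 0" using x0(1) assms unfolding is_norm_def
    by (metis norm_zero less_le mem_sphere_0 zero_neq_one)
  have "N x0 * norm x \<le> N x" for x
  proof (cases "x = 0")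
    case True then show ?thesis using isn_basic[OF assms] by simp
  next
    case False
    have "N x0 \<le> N ((1 / norm x) *\<^sub>R x)" using False by (intro x0(2)) simp
    also have "\<dots> = N x / norm x" using isn_basic(6)[OF assms] by simp
    finally show ?thesis using False by (simp add: field_simps)
  qed
  then show ?thesis using pos by blast
qed

lemma extend_ineq:
  fixes F :: "'a::euclidean_space \<Rightarrow> real" and K :: "'a \<Rightarrow> real"
  assumes D: "convex D" "interior D \<noteq> {}" and cF: "continuous_on D F" and cK: "continuous_on UNIV K"
    and H: "\<And>x y t. x \<in> D \<Longrightarrow> y \<in> D \<Longrightarrow> 0 \<le> t \<Longrightarrow> t \<le> 1 \<Longrightarrow> (1-t) *\<^sub>R x + t *\<^sub>R y \<in> interior D \<Longrightarrow>
        t * (1-t) * K (x - y) \<le> (1-t) * F x + t * F y - F ((1-t) *\<^sub>R x + t *\<^sub>R y)"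
    and xy: "x \<in> D" "y \<in> D" "0 \<le> t" "t \<le> 1"
  shows "t * (1-t) * K (x - y) \<le> (1-t) * F x + t * F y - F ((1-t) *\<^sub>R x + t *\<^sub>R y)"
proof -
  obtain c where c: "c \<in> interior D" using D(2) by blast
  define s where "s k = inverse (real (Suc k))" for k
  have s0: "s \<longlonglongrightarrow> 0" unfolding s_def by (rule LIMSEQ_inverse_real_of_nat)
  have spos: "0 < s k" "s k \<le> 1" for k unfolding s_def by (auto simp: field_simps)
  define xk where "xk k = x - s k *\<^sub>R (x - c)" for k
  define yk where "yk k = y - s k *\<^sub>R (y - c)" for k
  define w where "w = (1-t) *\<^sub>R x + t *\<^sub>R y"
  define wk where "wk k = (1-t) *\<^sub>R xk k + t *\<^sub>R yk k" for k
  have xki: "xk k \<in> interior D" for k unfolding xk_def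
    by (rule mem_interior_convex_shrink[OF D(1) c xy(1) spos])
  have yki: "yk k \<in> interior D" for k unfolding yk_def
    by (rule mem_interior_convex_shrink[OF D(1) c xy(2) spos])
  have wki: "wk k \<in> interior D" for k unfolding wk_def
    using convexD[OF convex_interior[OF D(1)] xki yki, of "1-t" t] xy by simp
  have inD: "interior D \<subseteq> D" by (rule interior_subset)
  have wD: "w \<in> D" unfolding w_def using convexD[OF D(1) xy(1,2), of "1-t" t] xy by simp
  have xl: "xk \<longlonglongrightarrow> x" unfolding xk_def using tendsto_diff[OF tendsto_const tendsto_scaleR[OF s0 tendsto_const], of x "x - c"] by simp
  have yl: "yk \<longlonglongrightarrow> y" unfolding yk_def using tendsto_diff[OF tendsto_const tendsto_scaleR[OF s0 tendsto_const], of y "y - c"] by simp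
  have wl: "wk \<longlonglongrightarrow> w" unfolding wk_def w_def by (intro tendsto_intros xl yl)
  have Fx: "(\<lambda>k. F (xk k)) \<longlonglongrightarrow> F x"
    by (rule continuous_on_tendsto_compose[OF cF xl xy(1)]) (use xki inD in \<open>auto intro!: always_eventually\<close>)
  have Fy: "(\<lambda>k. F (yk k)) \<longlonglongrightarrow> F y"
    by (rule continuous_on_tendsto_compose[OF cF yl xy(2)]) (use yki inD in \<open>auto intro!: always_eventually\<close>)
  have Fw: "(\<lambda>k. F (wk k)) \<longlonglongrightarrow> F w"
    by (rule continuous_on_tendsto_compose[OF cF wl wD]) (use wki inD in \<open>auto intro!: always_eventually\<close>)
  have Kl: "(\<lambda>k. K (xk k - yk k)) \<longlonglongrightarrow> K (x - y)"
    by (rule continuous_on_tendsto_compose[OF cK tendsto_diff[OF xl yl]]) auto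
  have "t * (1-t) * K (x - y) \<le> (1-t) * F x + t * F y - F w"
  proof (rule LIMSEQ_le)
    show "(\<lambda>k. t * (1-t) * K (xk k - yk k)) \<longlonglongrightarrow> t * (1-t) * K (x - y)" by (intro tendsto_intros Kl)
    show "(\<lambda>k. (1-t) * F (xk k) + t * F (yk k) - F (wk k)) \<longlonglongrightarrow> (1-t) * F x + t * F y - F w"
      by (intro tendsto_intros Fx Fy Fw)
    show "\<exists>N. \<forall>n\<ge>N. t * (1-t) * K (xk n - yk n) \<le> (1-t) * F (xk n) + t * F (yk n) - F (wk n)"
      using H[OF _ _ xy(3,4)] xki yki wki inD unfolding wk_def by blast
  qed
  then show ?thesis unfolding w_def .
qed

lemma fo_combine:
  fixes x y G :: "'a::real_inner"
  assumes w: "w = (1-t) *\<^sub>R x + t *\<^sub>R y" and t: "0 \<le> t" "t \<le> 1"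
    and hx: "F w + G \<bullet> (x - w) + a * t\<^sup>2 \<le> F x"
    and hy: "F w + G \<bullet> (y - w) + a * (1-t)\<^sup>2 \<le> F y"
  shows "t * (1-t) * a \<le> (1-t) * F x + t * F y - F w"
proof -
  have z: "(1-t) * (G \<bullet> (x - w)) + t * (G \<bullet> (y - w)) = 0"
  proof -
    have "(1-t) *\<^sub>R (x - w) + t *\<^sub>R (y - w) = 0" unfolding w by (simp add: algebra_simps)
    then have "G \<bullet> ((1-t) *\<^sub>R (x - w) + t *\<^sub>R (y - w)) = 0" by simp
    then show ?thesis by (simp add: inner_add_right)
  qed
  have "(1-t) * (F w + G \<bullet> (x - w) + a * t\<^sup>2) \<le> (1-t) * F x" using hx t by (intro mult_left_mono) auto
  moreover have "t * (F w + G \<bullet> (y - w) + a * (1-t)\<^sup>2) \<le> t * F y" using hy t by (intro mult_left_mono) auto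
  ultimately show ?thesis using z by (simp add: algebra_simps power2_eq_square) 
qed

lemma breg_strong:
  fixes \<phi> :: "'a::euclidean_space \<Rightarrow> real"
  assumes k: "bregman_kernel D \<phi> g" and N: "is_norm N"
    and s: "\<And>x x'. x \<in> D \<Longrightarrow> x' \<in> interior D \<Longrightarrow> bregman_dist \<phi> g x x' \<ge> 1/2 * (N (x - x'))\<^sup>2"
    and xy: "x \<in> D" "y \<in> D" "0 \<le> t" "t \<le> 1"
  shows "t * (1-t) * (1/2 * (N (x - y))\<^sup>2) \<le> (1-t) * \<phi> x + t * \<phi> y - \<phi> ((1-t) *\<^sub>R x + t *\<^sub>R y)"
proof (rule extend_ineq[where K = "\<lambda>v. 1/2 * (N v)\<^sup>2", OF _ _ _ _ _ xy])
  show "convex D" using k by (auto simp: bregman_kernel_def convex_on_def)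
  show "interior D \<noteq> {}" "continuous_on D \<phi>" using k by (auto simp: bregman_kernel_def)
  show "continuous_on UNIV (\<lambda>v. 1/2 * (N v)\<^sup>2)" using isn_cont[OF N] by (intro continuous_intros)
  fix x y t assume x: "x \<in> D" and y: "y \<in> D" and t: "0 \<le> t" "t \<le> 1"
    and wi: "(1-t) *\<^sub>R x + t *\<^sub>R y \<in> interior D"
  define w where "w = (1-t) *\<^sub>R x + t *\<^sub>R y"
  have e1: "x - w = t *\<^sub>R (x - y)" unfolding w_def by (simp add: algebra_simps)
  have e2: "y - w = (1-t) *\<^sub>R (y - x)" unfolding w_def by (simp add: algebra_simps)
  have n1: "N (x - w) = t * N (x - y)" using e1 isn_basic(6)[OF N, of t "x - y"] t by simp
  have n2: "N (y - w) = (1-t) * N (x - y)" using e2 isn_basic(6)[OF N, of "1-t" "y - x"] isn_basic(3)[OF N, of y x] t by simp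
  show "t * (1-t) * (1/2 * (N (x - y))\<^sup>2) \<le> (1-t) * \<phi> x + t * \<phi> y - \<phi> ((1-t) *\<^sub>R x + t *\<^sub>R y)"
    unfolding w_def[symmetric]
  proof (rule fo_combine[OF w_def t])
    show "\<phi> w + g w \<bullet> (x - w) + 1/2 * (N (x - y))\<^sup>2 * t\<^sup>2 \<le> \<phi> x"
      using s[OF x wi[folded w_def]] n1 by (simp add: bregman_dist_def power_mult_distrib algebra_simps)
    show "\<phi> w + g w \<bullet> (y - w) + 1/2 * (N (x - y))\<^sup>2 * (1-t)\<^sup>2 \<le> \<phi> y"
    proof -
      have q: "1/2 * (N (y - w))\<^sup>2 = 1/2 * (N (x - y))\<^sup>2 * (1-t)\<^sup>2" unfolding n2 by (simp add: power_mult_distrib)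
      show ?thesis using s[OF y wi[folded w_def]] unfolding bregman_dist_def q by simp
    qed
  qed
qed

lemma breg_h:
  fixes \<phi> :: "'a::euclidean_space \<Rightarrow> real"
  assumes k: "bregman_kernel D \<phi> g"
    and hd: "\<And>x. x \<in> D \<Longrightarrow> (h has_derivative (\<lambda>v. gh x \<bullet> v)) (at x)"
    and s: "\<And>x x'. x \<in> D \<Longrightarrow> x' \<in> interior D \<Longrightarrow> h x - h x' - gh x' \<bullet> (x - x') \<le> L * bregman_dist \<phi> g x x'"
    and xy: "x \<in> D" "y \<in> D" "0 \<le> t" "t \<le> 1"
  shows "(1-t) * h x + t * h y - h ((1-t) *\<^sub>R x + t *\<^sub>R y) \<le> L * ((1-t) * \<phi> x + t * \<phi> y - \<phi> ((1-t) *\<^sub>R x + t *\<^sub>R y))"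
proof -
  have "t * (1-t) * (\<lambda>v. 0) (x - y) \<le> (1-t) * (\<lambda>x. L * \<phi> x - h x) x + t * (\<lambda>x. L * \<phi> x - h x) y - (\<lambda>x. L * \<phi> x - h x) ((1-t) *\<^sub>R x + t *\<^sub>R y)"
  proof (rule extend_ineq[OF _ _ _ _ _ xy])
    show "convex D" using k by (auto simp: bregman_kernel_def convex_on_def)
    show "interior D \<noteq> {}" using k by (auto simp: bregman_kernel_def)
    have "continuous_on D h"
      using hd by (intro continuous_at_imp_continuous_on ballI has_derivative_continuous) blast
    then show "continuous_on D (\<lambda>x. L * \<phi> x - h x)" using k
      by (intro continuous_intros) (auto simp: bregman_kernel_def)
    show "continuous_on UNIV (\<lambda>v. 0::real)" by simp
    fix x y t assume x: "x \<in> D" and y: "y \<in> D" and t: "0 \<le> t" "t \<le> 1"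
      and wi: "(1-t) *\<^sub>R x + t *\<^sub>R y \<in> interior D"
    define w where "w = (1-t) *\<^sub>R x + t *\<^sub>R y"
    show "t * (1-t) * 0 \<le> (1-t) * (L * \<phi> x - h x) + t * (L * \<phi> y - h y) - (L * \<phi> ((1-t) *\<^sub>R x + t *\<^sub>R y) - h ((1-t) *\<^sub>R x + t *\<^sub>R y))"
      unfolding w_def[symmetric]
    proof (rule fo_combine[OF w_def t, where G = "L *\<^sub>R g w - gh w"])
      show "L * \<phi> w - h w + (L *\<^sub>R g w - gh w) \<bullet> (x - w) + 0 * t\<^sup>2 \<le> L * \<phi> x - h x"
        using s[OF x wi[folded w_def]] by (simp add: bregman_dist_def algebra_simps inner_diff_left)
      show "L * \<phi> w - h w + (L *\<^sub>R g w - gh w) \<bullet> (y - w) + 0 * (1-t)\<^sup>2 \<le> L * \<phi> y - h y"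
        using s[OF y wi[folded w_def]] by (simp add: bregman_dist_def algebra_simps inner_diff_left)
    qed
  qed
  then show ?thesis by (simp add: algebra_simps)
qed

lemma opn_bound:
  fixes A :: "real^'n^'m" and Np :: "real^'n \<Rightarrow> real" and Nd :: "real^'m \<Rightarrow> real"
  assumes Np: "is_norm Np" and Nd: "is_norm Nd"
  shows "\<bar>v \<bullet> (A *v u)\<bar> \<le> op_norm_pd Np Nd A * Nd v * Np u"
proof -
  obtain kp where kp: "kp > 0" "\<And>x. kp * norm x \<le> Np x" using isn_lower[OF Np] by blast
  obtain kd where kd: "kd > 0" "\<And>x. kd * norm x \<le> Nd x" using isn_lower[OF Nd] by blast
  obtain B where B: "B > 0" "\<And>x. norm (A *v x) \<le> norm x * B"
    using bounded_linear.pos_bounded[OF matrix_vector_mul_bounded_linear[of A]] by blast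
  let ?X = "{(v \<bullet> (A *v u)) / (Nd v * Np u) | u v. u \<noteq> 0 \<and> v \<noteq> 0}"
  have bdd: "bdd_above ?X"
  proof (rule bdd_aboveI)
    fix r assume "r \<in> ?X"
    then obtain u v where uv: "u \<noteq> 0" "v \<noteq> 0" and r: "r = (v \<bullet> (A *v u)) / (Nd v * Np u)" by blast
    have "v \<bullet> (A *v u) \<le> norm v * (norm u * B)"
      using Cauchy_Schwarz_ineq2[of v "A *v u"] B(2)[of u] by (meson abs_le_D1 mult_left_mono norm_ge_zero order_trans)
    also have "\<dots> = (B / (kd * kp)) * ((kd * norm v) * (kp * norm u))" using kp kd by (simp add: field_simps)
    also have "\<dots> \<le> (B / (kd * kp)) * (Nd v * Np u)"
      using kp kd B isn_basic(5)[OF Np] isn_basic(5)[OF Nd] by (intro mult_left_mono mult_mono) auto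
    finally have "v \<bullet> (A *v u) \<le> (B / (kd * kp)) * (Nd v * Np u)" .
    moreover have "Nd v * Np u > 0"
      using kp(2)[of u] kd(2)[of v] kp(1) kd(1) uv by (metis mult_pos_pos zero_less_norm_iff order_less_le_trans)
    ultimately show "r \<le> B / (kd * kp)" unfolding r by (simp add: divide_le_eq)
  qed
  have main: "w \<bullet> (A *v u) \<le> op_norm_pd Np Nd A * Nd w * Np u" for w
  proof (cases "u = 0 \<or> w = 0")
    case True then show ?thesis using isn_basic(1)[OF Np] isn_basic(1)[OF Nd] by auto
  next
    case False
    have pos: "Nd w * Np u > 0"
      using kp(2)[of u] kd(2)[of w] kp(1) kd(1) False by (metis mult_pos_pos zero_less_norm_iff order_less_le_trans)
    have "(w \<bullet> (A *v u)) / (Nd w * Np u) \<le> op_norm_pd Np Nd A"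
      unfolding op_norm_pd_def using False by (intro cSup_upper[OF _ bdd]) blast
    then show ?thesis using pos by (simp add: divide_le_eq mult.assoc)
  qed
  show ?thesis using main[of v] main[of "-v"] isn_basic(2)[OF Nd, of v] by (simp add: abs_le_iff)
qed

lemma quad_nonneg:
  fixes \<alpha> \<beta> n a b :: real
  assumes "\<alpha> \<ge> 0" "\<beta> \<ge> 0" "\<alpha> * \<beta> \<ge> n\<^sup>2"
  shows "\<alpha> * a\<^sup>2 + \<beta> * b\<^sup>2 - 2 * n * a * b \<ge> 0"
proof (cases "\<alpha> = 0")
  case True
  then have "n\<^sup>2 = 0" using assms zero_le_power2[of n] by simp
  then have "n = 0" by simp
  then show ?thesis using True assms by simp
next
  case False
  then have ap: "\<alpha> > 0" using assms by simp
  have "\<alpha> * (\<alpha> * a\<^sup>2 + \<beta> * b\<^sup>2 - 2 * n * a * b) = (\<alpha> * a - n * b)\<^sup>2 + (\<alpha> * \<beta> - n\<^sup>2) * b\<^sup>2"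
    by (simp add: power2_eq_square algebra_simps)
  also have "\<dots> \<ge> 0" using assms by simp
  finally show ?thesis using ap by (simp add: zero_le_mult_iff)
qed

lemma nsq_defect:
  fixes x y :: "'a::real_inner"
  shows "(1-t) * (norm x)\<^sup>2 + t * (norm y)\<^sup>2 - (norm ((1-t) *\<^sub>R x + t *\<^sub>R y))\<^sup>2 = t * (1-t) * (norm (x - y))\<^sup>2"
  unfolding power2_norm_eq_inner
  by (simp add: inner_add_left inner_add_right inner_diff_left inner_diff_right inner_commute algebra_simps power2_eq_square)

lemma bil_defect:
  fixes A :: "real^'n^'m"
  shows "(1-t) * (z1 \<bullet> (A *v x1)) + t * (z2 \<bullet> (A *v x2)) - ((1-t) *\<^sub>R z1 + t *\<^sub>R z2) \<bullet> (A *v ((1-t) *\<^sub>R x1 + t *\<^sub>R x2))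
    = t * (1-t) * ((z1 - z2) \<bullet> (A *v (x1 - x2)))"
  by (simp add: matrix_vector_right_distrib matrix_vector_mult_diff_distrib matrix_vector_mult_scaleR
      inner_add_left inner_add_right inner_diff_left inner_diff_right algebra_simps)

lemma conv_le:
  fixes \<sigma> \<tau> n k L :: real
  assumes "\<sigma> > 0" "\<tau> > 0" "\<sigma> * \<tau> * n\<^sup>2 + \<tau> * (k * L) \<le> 1"
  shows "(1/\<tau> - k * L) * (1/\<sigma>) \<ge> n\<^sup>2" "1/\<tau> - k * L \<ge> 0"
proof -
  have "\<sigma> * \<tau> * n\<^sup>2 \<ge> 0" using assms by simp
  have "\<sigma> * \<tau> * n\<^sup>2 \<le> 1 - \<tau> * (k * L)" using assms by simp
  then have "n\<^sup>2 \<le> (1 - \<tau> * (k * L)) / (\<sigma> * \<tau>)" using assms by (simp add: field_simps)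
  also have "\<dots> = (1/\<tau> - k * L) * (1/\<sigma>)" using assms by (simp add: field_simps)
  finally show "(1/\<tau> - k * L) * (1/\<sigma>) \<ge> n\<^sup>2" .
  have "\<tau> * (k * L) \<le> 1" using assms \<open>\<sigma> * \<tau> * n\<^sup>2 \<ge> 0\<close> by linarith
  then show "1/\<tau> - k * L \<ge> 0" using assms by (simp add: field_simps)
qed

lemma conv_lt:
  fixes \<sigma> \<tau> n k L :: real
  assumes "\<sigma> > 0" "\<tau> > 0" "\<sigma> * \<tau> * n\<^sup>2 + \<tau> * (k * L) < 1"
  shows "(1/\<tau> - k * L) * (1/\<sigma>) > n\<^sup>2"
proof -
  have "\<sigma> * \<tau> * n\<^sup>2 < 1 - \<tau> * (k * L)" using assms by simp
  then have "n\<^sup>2 < (1 - \<tau> * (k * L)) / (\<sigma> * \<tau>)" using assms by (simp add: field_simps)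
  also have "\<dots> = (1/\<tau> - k * L) * (1/\<sigma>)" using assms by (simp add: field_simps)
  finally show ?thesis .
qed

lemma eps_choice:
  fixes c q n :: real
  assumes "c * q > n\<^sup>2" "q > 0"
  shows "\<exists>\<epsilon>>0. c - \<epsilon> \<ge> 0 \<and> q - \<epsilon> \<ge> 0 \<and> (c - \<epsilon>) * (q - \<epsilon>) \<ge> n\<^sup>2"
proof -
  have "c * q > 0" using assms(1) zero_le_power2[of n] by linarith
  then have cp: "c > 0" using assms(2) by (simp add: zero_less_mult_iff)
  define \<epsilon> where "\<epsilon> = (c * q - n\<^sup>2) / (c + q)"
  have cq: "c + q > 0" using cp assms by simp
  have ep: "\<epsilon> > 0" unfolding \<epsilon>_def using assms cq by simp
  have e1: "\<epsilon> * (c + q) = c * q - n\<^sup>2" unfolding \<epsilon>_def using cq by simp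
  have "c * (c + q) \<ge> c * q - n\<^sup>2" using zero_le_power2[of n] zero_le_power2[of c] by (simp add: algebra_simps power2_eq_square)
  then have "\<epsilon> * (c + q) \<le> c * (c + q)" using e1 by simp
  then have a1: "c - \<epsilon> \<ge> 0" using mult_right_le_imp_le[OF _ cq] by simp
  have "q * (c + q) \<ge> c * q - n\<^sup>2" using zero_le_power2[of n] zero_le_power2[of q] by (simp add: algebra_simps power2_eq_square)
  then have "\<epsilon> * (c + q) \<le> q * (c + q)" using e1 by simp
  then have a2: "q - \<epsilon> \<ge> 0" using mult_right_le_imp_le[OF _ cq] by simp
  have "(c - \<epsilon>) * (q - \<epsilon>) = c * q - \<epsilon> * (c + q) + \<epsilon>\<^sup>2" by (simp add: algebra_simps power2_eq_square)
  also have "\<dots> = n\<^sup>2 + \<epsilon>\<^sup>2" using e1 by simp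
  finally have "(c - \<epsilon>) * (q - \<epsilon>) \<ge> n\<^sup>2" by simp
  then show ?thesis using ep a1 a2 by blast
qed
lemma lin_aux:
  fixes \<alpha> \<beta> uu vv w c y m1 m2 e1 e2 R M :: real
  shows "\<alpha> \<le> \<beta> \<Longrightarrow> R = 2 * uu + 2 * vv - 2 * c - e1 - e2 \<Longrightarrow> M = (m1 + m2)/2 \<Longrightarrow> uu \<le> \<alpha> \<Longrightarrow> vv \<le> w \<Longrightarrow> -c \<le> y
    \<Longrightarrow> m1 \<le> e1 \<Longrightarrow> m2 \<le> e2 \<Longrightarrow> 0 \<le> R \<Longrightarrow> 0 \<le> \<beta> + w + y - M"
  by simp

lemma core:
  fixes \<phi>p :: "real^'n \<Rightarrow> real" and gp :: "real^'n \<Rightarrow> real^'n" and Dp :: "(real^'n) set"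
    and \<phi>d :: "real^'m \<Rightarrow> real" and gd :: "real^'m \<Rightarrow> real^'m" and Dd :: "(real^'m) set"
    and Np :: "real^'n \<Rightarrow> real" and Nd :: "real^'m \<Rightarrow> real"
    and h :: "real^'n \<Rightarrow> real" and gh :: "real^'n \<Rightarrow> real^'n"
    and A :: "real^'n^'m" and L \<sigma> \<tau> :: real
  assumes kp: "bregman_kernel Dp \<phi>p gp"
    and kd: "bregman_kernel Dd \<phi>d gd"
    and Np: "is_norm Np" and Nd: "is_norm Nd"
    and sp: "\<And>x x'. x \<in> Dp \<Longrightarrow> x' \<in> interior Dp \<Longrightarrow> bregman_dist \<phi>p gp x x' \<ge> 1/2 * (Np (x - x'))\<^sup>2"
    and sd: "\<And>z z'. z \<in> Dd \<Longrightarrow> z' \<in> interior Dd \<Longrightarrow> bregman_dist \<phi>d gd z z' \<ge> 1/2 * (Nd (z - z'))\<^sup>2"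
    and hd: "\<And>x. x \<in> Dp \<Longrightarrow> (h has_derivative (\<lambda>v. gh x \<bullet> v)) (at x)"
    and h_smooth: "\<And>x x'. x \<in> Dp \<Longrightarrow> x' \<in> interior Dp \<Longrightarrow>
                      h x - h x' - gh x' \<bullet> (x - x') \<le> L * bregman_dist \<phi>p gp x x'"
    and \<sigma>: "\<sigma> > 0" and \<tau>: "\<tau> > 0"
    and k: "k \<ge> 0" and s: "s = 1 \<or> s = -1" and \<epsilon>: "\<epsilon> \<ge> 0"
    and c1: "1/\<tau> - k * L - \<epsilon> \<ge> 0" and c2: "1/\<sigma> - \<epsilon> \<ge> 0"
    and c3: "(1/\<tau> - k * L - \<epsilon>) * (1/\<sigma> - \<epsilon>) \<ge> (op_norm_pd Np Nd A)\<^sup>2"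
    and mp: "\<And>x. \<mu> * (norm x)\<^sup>2 \<le> \<epsilon> * (Np x)\<^sup>2"
    and md: "\<And>z. \<mu> * (norm z)\<^sup>2 \<le> \<epsilon> * (Nd z)\<^sup>2"
  shows "convex_on (Dp \<times> Dd) (\<lambda>(x, z). 1/\<tau> * \<phi>p x + 1/\<sigma> * \<phi>d z + s * (z \<bullet> (A *v x)) - k * h x - \<mu>/2 * (norm (x, z))\<^sup>2)"
proof (rule convex_onI)
  show "convex (Dp \<times> Dd)" using kp kd by (intro convex_Times) (auto simp: bregman_kernel_def convex_on_def)
  fix t :: real and p1 p2 assume t: "0 < t" "t < 1" and p1: "p1 \<in> Dp \<times> Dd" and p2: "p2 \<in> Dp \<times> Dd"
  obtain x1 z1 where e1: "p1 = (x1, z1)" and x1: "x1 \<in> Dp" and z1: "z1 \<in> Dd" using p1 by auto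
  obtain x2 z2 where e2: "p2 = (x2, z2)" and x2: "x2 \<in> Dp" and z2: "z2 \<in> Dd" using p2 by auto
  define nA where "nA = op_norm_pd Np Nd A"
  define T where "T = t * (1-t)"
  define wx where "wx = (1-t) *\<^sub>R x1 + t *\<^sub>R x2"
  define wz where "wz = (1-t) *\<^sub>R z1 + t *\<^sub>R z2"
  define a where "a = Np (x1 - x2)"
  define b where "b = Nd (z1 - z2)"
  define DP where "DP = (1-t) * \<phi>p x1 + t * \<phi>p x2 - \<phi>p wx"
  define DD where "DD = (1-t) * \<phi>d z1 + t * \<phi>d z2 - \<phi>d wz"
  define DH where "DH = (1-t) * h x1 + t * h x2 - h wx"
  define X where "X = (z1 - z2) \<bullet> (A *v (x1 - x2))"
  define NX where "NX = (norm (x1 - x2))\<^sup>2"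
  define NZ where "NZ = (norm (z1 - z2))\<^sup>2"
  have T0: "T \<ge> 0" unfolding T_def using t by simp
  have P: "T * (1/2 * a\<^sup>2) \<le> DP" unfolding T_def a_def DP_def wx_def
    using breg_strong[OF kp Np sp x1 x2, of t] t by simp
  have D: "T * (1/2 * b\<^sup>2) \<le> DD" unfolding T_def b_def DD_def wz_def
    using breg_strong[OF kd Nd sd z1 z2, of t] t by simp
  have H: "DH \<le> L * DP" unfolding DH_def DP_def wx_def
    using breg_h[OF kp hd h_smooth x1 x2, of t] t by simp
  have Bil: "(1-t) * (z1 \<bullet> (A *v x1)) + t * (z2 \<bullet> (A *v x2)) - wz \<bullet> (A *v wx) = T * X"
    unfolding T_def X_def wx_def wz_def by (rule bil_defect)
  have Bnd: "\<bar>X\<bar> \<le> nA * b * a" unfolding X_def nA_def a_def b_def by (rule opn_bound[OF Np Nd])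
  have Nsq: "(1-t) * (norm (x1, z1))\<^sup>2 + t * (norm (x2, z2))\<^sup>2 - (norm (wx, wz))\<^sup>2 = T * (NX + NZ)"
  proof -
    have np: "\<And>x z. (norm (x, z))\<^sup>2 = (norm x)\<^sup>2 + (norm z)\<^sup>2" by (simp add: norm_Pair)
    show ?thesis unfolding T_def NX_def NZ_def wx_def wz_def np
      using nsq_defect[of t x1 x2] nsq_defect[of t z1 z2] by (simp add: algebra_simps)
  qed
  have f1: "(1/\<tau> - k * L) * (T * (1/2 * a\<^sup>2)) \<le> (1/\<tau> - k * L) * DP"
    using P c1 \<epsilon> by (intro mult_left_mono) auto
  have f2: "(1/\<sigma>) * (T * (1/2 * b\<^sup>2)) \<le> (1/\<sigma>) * DD"
    using D \<sigma> by (intro mult_left_mono) auto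
  have f3: "k * DH \<le> k * (L * DP)" using H k by (intro mult_left_mono) auto
  have f4: "s * (T * X) \<ge> - (T * (nA * b * a))"
  proof -
    have "T * X \<le> T * (nA * b * a)" "T * (-X) \<le> T * (nA * b * a)" using Bnd T0 by (intro mult_left_mono; simp)+
    then show ?thesis using s by auto
  qed
  have f5: "T * (\<mu> * NX) \<le> T * (\<epsilon> * a\<^sup>2)" "T * (\<mu> * NZ) \<le> T * (\<epsilon> * b\<^sup>2)"
    using T0 mp md unfolding NX_def NZ_def a_def b_def by (intro mult_left_mono; simp)+
  have f6: "T * ((1/\<tau> - k * L - \<epsilon>) * a\<^sup>2 + (1/\<sigma> - \<epsilon>) * b\<^sup>2 - 2 * nA * a * b) \<ge> 0"
    using T0 quad_nonneg[OF c1 c2 c3[folded nA_def]] by simp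
  have goal: "0 \<le> 1/\<tau> * DP + 1/\<sigma> * DD + s * (T * X) - k * DH - \<mu>/2 * (T * (NX + NZ))"
  proof -
    have "1/\<tau> * DP - k * DH \<ge> (1/\<tau> - k * L) * DP" using f3 by (simp add: algebra_simps)
    moreover have "T * ((1/\<tau> - k * L - \<epsilon>) * a\<^sup>2 + (1/\<sigma> - \<epsilon>) * b\<^sup>2 - 2 * nA * a * b)
       = 2 * ((1/\<tau> - k * L) * (T * (1/2 * a\<^sup>2))) + 2 * ((1/\<sigma>) * (T * (1/2 * b\<^sup>2))) - 2 * (T * (nA * b * a))
         - T * (\<epsilon> * a\<^sup>2) - T * (\<epsilon> * b\<^sup>2)" by (simp add: field_simps)
    moreover have "\<mu>/2 * (T * (NX + NZ)) = (T * (\<mu> * NX) + T * (\<mu> * NZ)) / 2" by (simp add: algebra_simps)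
    ultimately have "0 \<le> (1/\<tau> * DP - k * DH) + 1/\<sigma> * DD + s * (T * X) - \<mu>/2 * (T * (NX + NZ))"
      using f1 f2 f4 f5 f6 by (rule lin_aux)
    then show ?thesis by (simp add: algebra_simps)
  qed
  have "(1-t) * (1/\<tau> * \<phi>p x1 + 1/\<sigma> * \<phi>d z1 + s * (z1 \<bullet> (A *v x1)) - k * h x1 - \<mu>/2 * (norm (x1, z1))\<^sup>2)
      + t * (1/\<tau> * \<phi>p x2 + 1/\<sigma> * \<phi>d z2 + s * (z2 \<bullet> (A *v x2)) - k * h x2 - \<mu>/2 * (norm (x2, z2))\<^sup>2)
      - (1/\<tau> * \<phi>p wx + 1/\<sigma> * \<phi>d wz + s * (wz \<bullet> (A *v wx)) - k * h wx - \<mu>/2 * (norm (wx, wz))\<^sup>2)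
      = 1/\<tau> * DP + 1/\<sigma> * DD + s * ((1-t) * (z1 \<bullet> (A *v x1)) + t * (z2 \<bullet> (A *v x2)) - wz \<bullet> (A *v wx)) - k * DH
        - \<mu>/2 * ((1-t) * (norm (x1, z1))\<^sup>2 + t * (norm (x2, z2))\<^sup>2 - (norm (wx, wz))\<^sup>2)"
    unfolding DP_def DD_def DH_def using \<sigma> \<tau> by (simp add: field_simps)
  also have "\<dots> = 1/\<tau> * DP + 1/\<sigma> * DD + s * (T * X) - k * DH - \<mu>/2 * (T * (NX + NZ))"
    unfolding Bil Nsq ..
  finally have "0 \<le> (1-t) * (1/\<tau> * \<phi>p x1 + 1/\<sigma> * \<phi>d z1 + s * (z1 \<bullet> (A *v x1)) - k * h x1 - \<mu>/2 * (norm (x1, z1))\<^sup>2)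
      + t * (1/\<tau> * \<phi>p x2 + 1/\<sigma> * \<phi>d z2 + s * (z2 \<bullet> (A *v x2)) - k * h x2 - \<mu>/2 * (norm (x2, z2))\<^sup>2)
      - (1/\<tau> * \<phi>p wx + 1/\<sigma> * \<phi>d wz + s * (wz \<bullet> (A *v wx)) - k * h wx - \<mu>/2 * (norm (wx, wz))\<^sup>2)"
    using goal by simp
  then show "(\<lambda>(x, z). 1/\<tau> * \<phi>p x + 1/\<sigma> * \<phi>d z + s * (z \<bullet> (A *v x)) - k * h x - \<mu>/2 * (norm (x, z))\<^sup>2) ((1-t) *\<^sub>R p1 + t *\<^sub>R p2)
    \<le> (1-t) * (\<lambda>(x, z). 1/\<tau> * \<phi>p x + 1/\<sigma> * \<phi>d z + s * (z \<bullet> (A *v x)) - k * h x - \<mu>/2 * (norm (x, z))\<^sup>2) p1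
     + t * (\<lambda>(x, z). 1/\<tau> * \<phi>p x + 1/\<sigma> * \<phi>d z + s * (z \<bullet> (A *v x)) - k * h x - \<mu>/2 * (norm (x, z))\<^sup>2) p2"
    unfolding e1 e2 wx_def wz_def by simp
qed

theorem mainTheorem2:
  fixes \<phi>p :: "real^'n \<Rightarrow> real" and gp :: "real^'n \<Rightarrow> real^'n" and Dp :: "(real^'n) set"
    and \<phi>d :: "real^'m \<Rightarrow> real" and gd :: "real^'m \<Rightarrow> real^'m" and Dd :: "(real^'m) set"
    and Np :: "real^'n \<Rightarrow> real" and Nd :: "real^'m \<Rightarrow> real"
    and h :: "real^'n \<Rightarrow> real" and gh :: "real^'n \<Rightarrow> real^'n" and Dh :: "(real^'n) set"
    and A :: "real^'n^'m" and L \<sigma> \<tau> :: real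
  assumes kp: "bregman_kernel Dp \<phi>p gp"
    and kd: "bregman_kernel Dd \<phi>d gd"
    and Np: "is_norm Np" and Nd: "is_norm Nd"
    and sp: "\<And>x x'. x \<in> Dp \<Longrightarrow> x' \<in> interior Dp \<Longrightarrow> bregman_dist \<phi>p gp x x' \<ge> 1/2 * (Np (x - x'))\<^sup>2"
    and sd: "\<And>z z'. z \<in> Dd \<Longrightarrow> z' \<in> interior Dd \<Longrightarrow> bregman_dist \<phi>d gd z z' \<ge> 1/2 * (Nd (z - z'))\<^sup>2"
    and h_open: "open Dh" and h_conv: "convex_on Dh h"
    and h_diff: "\<And>x. x \<in> Dh \<Longrightarrow> (h has_derivative (\<lambda>v. gh x \<bullet> v)) (at x)"
    and dom_sub: "Dp \<subseteq> Dh"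
    and L_pos: "L > 0"
    and h_smooth: "\<And>x x'. x \<in> Dp \<Longrightarrow> x' \<in> interior Dp \<Longrightarrow>
                      h x - h x' - gh x' \<bullet> (x - x') \<le> L * bregman_dist \<phi>p gp x x'"
    and \<sigma>: "\<sigma> > 0" and \<tau>: "\<tau> > 0"
  shows
   "let nA = op_norm_pd Np Nd A;
        \<phi>plus = (\<lambda>(x, z). 1/\<tau> * \<phi>p x + 1/\<sigma> * \<phi>d z + z \<bullet> (A *v x));
        \<phi>minus = (\<lambda>(x, z). 1/\<tau> * \<phi>p x + 1/\<sigma> * \<phi>d z - z \<bullet> (A *v x));
        \<phi>dcv = (\<lambda>(x, z). \<phi>plus (x, z) - h x);
        \<phi>pcv = (\<lambda>(x, z). \<phi>minus (x, z) - h x);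
        S = Dp \<times> Dd
    in (\<sigma> * \<tau> * nA\<^sup>2 \<le> 1 \<longrightarrow> convex_on S \<phi>plus \<and> convex_on S \<phi>minus)
     \<and> (\<sigma> * \<tau> * nA\<^sup>2 < 1 \<longrightarrow> strongly_convex_on S \<phi>plus \<and> strongly_convex_on S \<phi>minus)
     \<and> (\<sigma> * \<tau> * nA\<^sup>2 + \<tau> * L \<le> 1 \<longrightarrow> convex_on S \<phi>dcv \<and> convex_on S \<phi>pcv)
     \<and> (\<sigma> * \<tau> * nA\<^sup>2 + \<tau> * L < 1 \<longrightarrow> strongly_convex_on S \<phi>dcv \<and> strongly_convex_on S \<phi>pcv)"
proof -
  define nA where "nA = op_norm_pd Np Nd A"
  have hd: "\<And>x. x \<in> Dp \<Longrightarrow> (h has_derivative (\<lambda>v. gh x \<bullet> v)) (at x)" using h_diff dom_sub by blast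
  obtain kp0 where kp0: "kp0 > 0" "\<And>x. kp0 * norm x \<le> Np x" using isn_lower[OF Np] by blast
  obtain kd0 where kd0: "kd0 > 0" "\<And>x. kd0 * norm x \<le> Nd x" using isn_lower[OF Nd] by blast
  define m where "m = min (kp0\<^sup>2) (kd0\<^sup>2)"
  have mpos: "m > 0" unfolding m_def using kp0 kd0 by simp
  have mp: "\<epsilon> * m * (norm x)\<^sup>2 \<le> \<epsilon> * (Np x)\<^sup>2" if "\<epsilon> \<ge> 0" for \<epsilon> x
  proof -
    have "m * (norm x)\<^sup>2 \<le> kp0\<^sup>2 * (norm x)\<^sup>2" unfolding m_def by (intro mult_right_mono) auto
    also have "\<dots> = (kp0 * norm x)\<^sup>2" by (simp add: power_mult_distrib)
    also have "\<dots> \<le> (Np x)\<^sup>2" using kp0 by (intro power_mono) auto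
    finally show ?thesis using that by (simp add: mult.assoc mult_left_mono)
  qed
  have md: "\<epsilon> * m * (norm x)\<^sup>2 \<le> \<epsilon> * (Nd x)\<^sup>2" if "\<epsilon> \<ge> 0" for \<epsilon> x
  proof -
    have "m * (norm x)\<^sup>2 \<le> kd0\<^sup>2 * (norm x)\<^sup>2" unfolding m_def by (intro mult_right_mono) auto
    also have "\<dots> = (kd0 * norm x)\<^sup>2" by (simp add: power_mult_distrib)
    also have "\<dots> \<le> (Nd x)\<^sup>2" using kd0 by (intro power_mono) auto
    finally show ?thesis using that by (simp add: mult.assoc mult_left_mono)
  qed
  have conv: "convex_on (Dp \<times> Dd) (\<lambda>(x, z). 1/\<tau> * \<phi>p x + 1/\<sigma> * \<phi>d z + s * (z \<bullet> (A *v x)) - k * h x - 0/2 * (norm (x, z))\<^sup>2)"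
    if "k \<ge> 0" "s = 1 \<or> s = -1" "\<sigma> * \<tau> * nA\<^sup>2 + \<tau> * (k * L) \<le> 1" for k s
  proof -
    note cl = conv_le[OF \<sigma> \<tau> that(3)]
    have c1: "1/\<tau> - k * L - 0 \<ge> 0" using cl(2) by simp
    have c2: "1/\<sigma> - 0 \<ge> (0::real)" using \<sigma> by simp
    have c3: "(1/\<tau> - k * L - 0) * (1/\<sigma> - 0) \<ge> (op_norm_pd Np Nd A)\<^sup>2" using cl(1) unfolding nA_def by simp
    have m0: "\<And>x::real^'n. 0 * (norm x)\<^sup>2 \<le> 0 * (Np x)\<^sup>2" by simp
    have m1: "\<And>x::real^'m. 0 * (norm x)\<^sup>2 \<le> 0 * (Nd x)\<^sup>2" by simp
    show ?thesis
      by (rule core[OF kp kd Np Nd sp sd hd h_smooth \<sigma> \<tau> that(1,2) order_refl c1 c2 c3 m0 m1])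
  qed
  have strong: "strongly_convex_on (Dp \<times> Dd) (\<lambda>(x, z). 1/\<tau> * \<phi>p x + 1/\<sigma> * \<phi>d z + s * (z \<bullet> (A *v x)) - k * h x)"
    if "k \<ge> 0" "s = 1 \<or> s = -1" "\<sigma> * \<tau> * nA\<^sup>2 + \<tau> * (k * L) < 1" for k s
  proof -
    have "(1/\<tau> - k * L) * (1/\<sigma>) > nA\<^sup>2" by (rule conv_lt[OF \<sigma> \<tau> that(3)])
    then obtain \<epsilon> where e: "\<epsilon> > 0" "1/\<tau> - k * L - \<epsilon> \<ge> 0" "1/\<sigma> - \<epsilon> \<ge> 0"
      "(1/\<tau> - k * L - \<epsilon>) * (1/\<sigma> - \<epsilon>) \<ge> nA\<^sup>2"
      using eps_choice[where c = "1/\<tau> - k * L" and q = "1/\<sigma>" and n = nA] \<sigma> by auto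
    have c: "convex_on (Dp \<times> Dd) (\<lambda>(x, z). 1/\<tau> * \<phi>p x + 1/\<sigma> * \<phi>d z + s * (z \<bullet> (A *v x)) - k * h x - (\<epsilon> * m)/2 * (norm (x, z))\<^sup>2)"
      by (rule core[OF kp kd Np Nd sp sd hd h_smooth \<sigma> \<tau> that(1,2) less_imp_le[OF e(1)] e(2) e(3) e(4)[unfolded nA_def]
          mp[OF less_imp_le[OF e(1)]] md[OF less_imp_le[OF e(1)]]])
    have eq: "(\<lambda>w. (\<lambda>(x, z). 1/\<tau> * \<phi>p x + 1/\<sigma> * \<phi>d z + s * (z \<bullet> (A *v x)) - k * h x) w - (\<epsilon> * m)/2 * (norm w)\<^sup>2)
        = (\<lambda>(x, z). 1/\<tau> * \<phi>p x + 1/\<sigma> * \<phi>d z + s * (z \<bullet> (A *v x)) - k * h x - (\<epsilon> * m)/2 * (norm (x, z))\<^sup>2)"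
      by (rule ext) (simp add: split_beta)
    show ?thesis unfolding strongly_convex_on_def
    proof (intro exI conjI)
      show "\<epsilon> * m > 0" using e(1) mpos by simp
      show "convex_on (Dp \<times> Dd) (\<lambda>w. (\<lambda>(x, z). 1/\<tau> * \<phi>p x + 1/\<sigma> * \<phi>d z + s * (z \<bullet> (A *v x)) - k * h x) w - (\<epsilon> * m)/2 * (norm w)\<^sup>2)"
        unfolding eq by (rule c)
    qed
  qed
  show ?thesis
    unfolding Let_def nA_def[symmetric]
  proof (intro conjI impI)
    assume a: "\<sigma> * \<tau> * nA\<^sup>2 \<le> 1"
    show "convex_on (Dp \<times> Dd) (\<lambda>(x, z). 1/\<tau> * \<phi>p x + 1/\<sigma> * \<phi>d z + z \<bullet> (A *v x))"
      using conv[of 0 1] a by simp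
    show "convex_on (Dp \<times> Dd) (\<lambda>(x, z). 1/\<tau> * \<phi>p x + 1/\<sigma> * \<phi>d z - z \<bullet> (A *v x))"
      using conv[of 0 "-1"] a by simp
  next
    assume a: "\<sigma> * \<tau> * nA\<^sup>2 < 1"
    show "strongly_convex_on (Dp \<times> Dd) (\<lambda>(x, z). 1/\<tau> * \<phi>p x + 1/\<sigma> * \<phi>d z + z \<bullet> (A *v x))"
      using strong[of 0 1] a by simp
    show "strongly_convex_on (Dp \<times> Dd) (\<lambda>(x, z). 1/\<tau> * \<phi>p x + 1/\<sigma> * \<phi>d z - z \<bullet> (A *v x))"
      using strong[of 0 "-1"] a by simp
  next
    assume a: "\<sigma> * \<tau> * nA\<^sup>2 + \<tau> * L \<le> 1"
    show "convex_on (Dp \<times> Dd) (\<lambda>(x, z). (\<lambda>(x, z). 1/\<tau> * \<phi>p x + 1/\<sigma> * \<phi>d z + z \<bullet> (A *v x)) (x, z) - h x)"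
      using conv[of 1 1] a by simp
    show "convex_on (Dp \<times> Dd) (\<lambda>(x, z). (\<lambda>(x, z). 1/\<tau> * \<phi>p x + 1/\<sigma> * \<phi>d z - z \<bullet> (A *v x)) (x, z) - h x)"
      using conv[of 1 "-1"] a by simp
  next
    assume a: "\<sigma> * \<tau> * nA\<^sup>2 + \<tau> * L < 1"
    show "strongly_convex_on (Dp \<times> Dd) (\<lambda>(x, z). (\<lambda>(x, z). 1/\<tau> * \<phi>p x + 1/\<sigma> * \<phi>d z + z \<bullet> (A *v x)) (x, z) - h x)"
      using strong[of 1 1] a by simp
    show "strongly_convex_on (Dp \<times> Dd) (\<lambda>(x, z). (\<lambda>(x, z). 1/\<tau> * \<phi>p x + 1/\<sigma> * \<phi>d z - z \<bullet> (A *v x)) (x, z) - h x)"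
      using strong[of 1 "-1"] a by simp
  qed
qed

end
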